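(* Let $\mathcal{Y}$ and $\mathcal{O}$ be finite sets, $\varphi\colon\mathcal{Y}\to\mathbb{R}^p$, $\psi\colon\mathcal{O}\to\mathbb{R}^p$, and let $L\colon\mathcal{O}\times\mathcal{Y}\to\mathbb{R}_+$ satisfy $L(\hat y,y)=\langle\psi(\hat y),V\varphi(y)+b\rangle+c(y)$ with $V\in\mathbb{R}^{p\times p}$, $b\in\mathbb{R}^p$, $c\colon\mathcal{Y}\to\mathbb{R}$. Let $\Omega\colon\mathbb{R}^p\to\mathbb{R}\cup\{\infty\}$ be proper, convex and lower semicontinuous with $\varphi(\mathcal{Y})\subseteq\operatorname{dom}(\Omega)$, and let the surrogate be $S(\theta,y)=S_\Omega(\theta,\varphi(y))$. Then for any decoder $d\colon\mathbb{R}^p\to\mathcal{O}$ and any $\epsilon\ge0$, the calibration function $$\zeta(\epsilon)=\inf_{\theta\in\mathbb{R}^p,\ q\in\triangle^{|\mathcal{Y}|}}\delta s(\theta,q)\quad\text{s.t.}\quad\delta\ell(d(\theta),q)\ge\epsilon$$ equals $$\zeta(\epsilon)=\inf_{\theta\in\mathbb{R}^p,\ \mu\in\mathcal{M}}S_\Omega(\theta,\mu)\quad\text{s.t.}\quad\langle\psi(d(\theta))-\psi(\hat y_L(\mu)),V\mu+b\rangle\ge\epsilon.$$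
   Context: $\triangle^{n}=\{q\in\mathbb{R}^n_+:\|q\|_1=1\}$. $S_\Omega(\theta,\mu)=\Omega^*(\theta)+\Omega(\mu)-\langle\theta,\mu\rangle$ where $\Omega^*$ is the Fenchel conjugate. $\mathcal{M}=\operatorname{conv}(\varphi(\mathcal{Y}))$, and for $q\in\triangle^{|\mathcal{Y}|}$, $\mu_\varphi(q)=\mathbb{E}_{Y\sim q}[\varphi(Y)]$. Pointwise risks: $\ell(\hat y,q)=\mathbb{E}_{Y\sim q}L(\hat y,Y)$, $s(\theta,q)=\mathbb{E}_{Y\sim q}S(\theta,Y)$; excess pointwise risks $\delta\ell(\hat y,q)=\ell(\hat y,q)-\min_{y'\in\mathcal{O}}\ell(y',q)$ and $\delta s(\theta,q)=s(\theta,q)-\inf_{\theta'\in\mathbb{R}^p}s(\theta',q)$. Calibrated decoding: $\hat y_L(u)\in\operatorname{argmin}_{y'\in\mathcal{O}}\langle\psi(y'),Vu+b\rangle$ (any fixed tie-breaking). *)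

theory Defs
  imports "HOL-Analysis.Analysis"
begin

definition proper_fun :: "('a::real_vector \<Rightarrow> ereal) \<Rightarrow> bool" where
  "proper_fun \<Omega> \<longleftrightarrow> (\<forall>x. \<Omega> x \<noteq> -\<infinity>) \<and> (\<exists>x. \<Omega> x \<noteq> \<infinity>)"

definition convex_ext :: "('a::real_vector \<Rightarrow> ereal) \<Rightarrow> bool" where
  "convex_ext \<Omega> \<longleftrightarrow> (\<forall>x y (t::real). 0 < t \<and> t < 1 \<longrightarrow>
      \<Omega> (t *\<^sub>R x + (1 - t) *\<^sub>R y) \<le> ereal t * \<Omega> x + ereal (1 - t) * \<Omega> y)"

definition lsc_fun :: "('a::topological_space \<Rightarrow> ereal) \<Rightarrow> bool" where
  "lsc_fun \<Omega> \<longleftrightarrow> (\<forall>x. \<Omega> x \<le> Liminf (at x) \<Omega>)"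

definition edom :: "('a \<Rightarrow> ereal) \<Rightarrow> 'a set" where
  "edom \<Omega> = {x. \<Omega> x < \<infinity>}"

definition fenchel_conj :: "('a::real_inner \<Rightarrow> ereal) \<Rightarrow> 'a \<Rightarrow> ereal" where
  "fenchel_conj \<Omega> \<theta> = (SUP \<mu>. ereal (\<theta> \<bullet> \<mu>) - \<Omega> \<mu>)"

definition fy_loss :: "('a::real_inner \<Rightarrow> ereal) \<Rightarrow> 'a \<Rightarrow> 'a \<Rightarrow> ereal" where
  "fy_loss \<Omega> \<theta> \<mu> = fenchel_conj \<Omega> \<theta> + \<Omega> \<mu> - ereal (\<theta> \<bullet> \<mu>)"

definition prob_simplex :: "'y set \<Rightarrow> ('y \<Rightarrow> real) set" where
  "prob_simplex Y = {q. (\<forall>y\<in>Y. 0 \<le> q y) \<and> (\<forall>y. y \<notin> Y \<longrightarrow> q y = 0) \<and> sum q Y = 1}"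

definition ptw_risk :: "'y set \<Rightarrow> ('o \<Rightarrow> 'y \<Rightarrow> real) \<Rightarrow> 'o \<Rightarrow> ('y \<Rightarrow> real) \<Rightarrow> real" where
  "ptw_risk Y L yh q = (\<Sum>y\<in>Y. q y * L yh y)"

definition excess_ptw_risk ::
  "'y set \<Rightarrow> 'o set \<Rightarrow> ('o \<Rightarrow> 'y \<Rightarrow> real) \<Rightarrow> 'o \<Rightarrow> ('y \<Rightarrow> real) \<Rightarrow> real" where
  "excess_ptw_risk Y Os L yh q = ptw_risk Y L yh q - (MIN y'\<in>Os. ptw_risk Y L y' q)"

definition surr_risk :: "'y set \<Rightarrow> ('t \<Rightarrow> 'y \<Rightarrow> ereal) \<Rightarrow> 't \<Rightarrow> ('y \<Rightarrow> real) \<Rightarrow> ereal" where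
  "surr_risk Y S \<theta> q = (\<Sum>y\<in>Y. ereal (q y) * S \<theta> y)"

definition excess_surr_risk :: "'y set \<Rightarrow> ('t \<Rightarrow> 'y \<Rightarrow> ereal) \<Rightarrow> 't \<Rightarrow> ('y \<Rightarrow> real) \<Rightarrow> ereal" where
  "excess_surr_risk Y S \<theta> q = surr_risk Y S \<theta> q - (INF \<theta>'. surr_risk Y S \<theta>' q)"

end

theory Submission
  imports Defs
begin


lemma epi_closed:
  fixes \<Omega> :: "'a::euclidean_space \<Rightarrow> ereal"
  assumes lsc: "lsc_fun \<Omega>"
  shows "closed {z::'a\<times>real. \<Omega> (fst z) \<le> ereal (snd z)}"
proof -
  have "open (- {z::'a\<times>real. \<Omega> (fst z) \<le> ereal (snd z)})"
  proof (rule open_prod_intro)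
    fix z :: "'a \<times> real" assume "z \<in> - {z::'a\<times>real. \<Omega> (fst z) \<le> ereal (snd z)}"
    then obtain x t where z: "z = (x,t)" and lt: "ereal t < \<Omega> x" by (cases z) auto
    obtain c where c1: "ereal t < ereal c" and c2: "ereal c < \<Omega> x" using ereal_dense2[OF lt] by blast
    have "\<Omega> x \<le> Liminf (at x) \<Omega>" using lsc unfolding lsc_fun_def by blast
    then have "eventually (\<lambda>y. ereal c < \<Omega> y) (at x)" using c2 le_Liminf_iff by blast
    then obtain S where S: "open S" "x \<in> S" "\<And>y. y \<in> S \<Longrightarrow> y \<noteq> x \<Longrightarrow> ereal c < \<Omega> y"
      unfolding eventually_at_topological by blast
    have "S \<times> {..<c} \<subseteq> - {z::'a\<times>real. \<Omega> (fst z) \<le> ereal (snd z)}"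
    proof
      fix w assume "w \<in> S \<times> {..<c}"
      then obtain y s where w: "w = (y,s)" "y \<in> S" "s < c" by auto
      have "ereal c < \<Omega> y" using S(3)[of y] c2 w by (cases "y = x") auto
      moreover have "ereal s < ereal c" using w by simp
      ultimately have "ereal s < \<Omega> y" by (meson less_trans)
      then show "w \<in> - {z::'a\<times>real. \<Omega> (fst z) \<le> ereal (snd z)}" using w by (auto simp: not_le)
    qed
    moreover have "z \<in> S \<times> {..<c}" using z S c1 by auto
    ultimately show "\<exists>A B. open A \<and> open B \<and> z \<in> A \<times> B \<and> A \<times> B \<subseteq> - {z::'a\<times>real. \<Omega> (fst z) \<le> ereal (snd z)}"
      using S(1) by (intro exI[of _ S] exI[of _ "{..<c}"]) auto
  qed
  then show ?thesis by (simp add: closed_def)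
qed

lemma epi_convex:
  fixes \<Omega> :: "'a::euclidean_space \<Rightarrow> ereal"
  assumes cv: "convex_ext \<Omega>"
  shows "convex {z::'a\<times>real. \<Omega> (fst z) \<le> ereal (snd z)}"
proof (rule convexI)
  fix z w :: "'a\<times>real" and u v :: real
  assume z: "z \<in> {z::'a\<times>real. \<Omega> (fst z) \<le> ereal (snd z)}" and w: "w \<in> {z::'a\<times>real. \<Omega> (fst z) \<le> ereal (snd z)}"
    and u: "0 \<le> u" and v: "0 \<le> v" and uv: "u + v = 1"
  show "u *\<^sub>R z + v *\<^sub>R w \<in> {z::'a\<times>real. \<Omega> (fst z) \<le> ereal (snd z)}"
  proof (cases "u = 0 \<or> v = 0")
    case True then show ?thesis using z w uv by auto
  next
    case False
    then have u0: "0 < u" "u < 1" and vv: "v = 1 - u" using u v uv by auto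
    have "\<Omega> (fst (u *\<^sub>R z + v *\<^sub>R w)) = \<Omega> (u *\<^sub>R fst z + (1-u) *\<^sub>R fst w)" using vv by simp
    also have "\<dots> \<le> ereal u * \<Omega> (fst z) + ereal (1-u) * \<Omega> (fst w)"
      using cv u0 unfolding convex_ext_def by blast
    also have "\<dots> \<le> ereal u * ereal (snd z) + ereal (1-u) * ereal (snd w)"
      using z w u0 by (intro add_mono ereal_mult_left_mono) auto
    also have "\<dots> = ereal (snd (u *\<^sub>R z + v *\<^sub>R w))" using vv by simp
    finally show ?thesis by simp
  qed
qed

lemma fenchel_moreau_pt:
  fixes \<Omega> :: "'a::euclidean_space \<Rightarrow> ereal"
  assumes proper: "proper_fun \<Omega>" and cv: "convex_ext \<Omega>" and lsc: "lsc_fun \<Omega>"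
    and m: "\<Omega> \<mu> = ereal m" and al: "\<alpha> < m"
  shows "\<exists>\<theta>. \<forall>x. ereal (\<theta> \<bullet> x) - \<Omega> x \<le> ereal (\<theta> \<bullet> \<mu> - \<alpha>)"
proof -
  let ?E = "{z::'a\<times>real. \<Omega> (fst z) \<le> ereal (snd z)}"
  have "(\<mu>, \<alpha>) \<notin> ?E" using m al by simp
  then obtain a bb where s1: "inner a (\<mu>,\<alpha>) < bb" and s2: "\<forall>z\<in>?E. inner a z > bb"
    using separating_hyperplane_closed_point[OF epi_convex[OF cv] epi_closed[OF lsc]] by blast
  obtain a1 \<beta> where a: "a = (a1, \<beta>)" by (cases a)
  have i1: "a1 \<bullet> \<mu> + \<beta> * \<alpha> < bb" using s1 a by simp
  have i2: "a1 \<bullet> \<mu> + \<beta> * m > bb" using s2[rule_format, of "(\<mu>, m)"] a m by simp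
  have "\<beta> * (m - \<alpha>) > 0" using i1 i2 by (simp add: algebra_simps)
  then have bpos: "\<beta> > 0" using al by (simp add: zero_less_mult_iff)
  define \<theta> where "\<theta> = (- 1 / \<beta>) *\<^sub>R a1"
  show ?thesis
  proof (intro exI allI)
    fix x
    show "ereal (\<theta> \<bullet> x) - \<Omega> x \<le> ereal (\<theta> \<bullet> \<mu> - \<alpha>)"
    proof (cases "\<Omega> x")
      case (real t)
      have "a1 \<bullet> x + \<beta> * t > bb" using s2[rule_format, of "(x, t)"] a real by simp
      then have "\<beta> * (\<alpha> * \<beta> + a1 \<bullet> \<mu>) \<le> \<beta> * (\<beta> * t + a1 \<bullet> x)"
        using i1 bpos by (intro mult_left_mono) (auto simp: algebra_simps)
      then have "\<theta> \<bullet> x - t \<le> \<theta> \<bullet> \<mu> - \<alpha>" using bpos unfolding \<theta>_def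
        by (simp add: field_simps)
      then show ?thesis using real by simp
    next
      case PInf then show ?thesis by simp
    next
      case MInf then show ?thesis using proper unfolding proper_fun_def by blast
    qed
  qed
qed


theorem mainTheorem6:
  fixes Y :: "'y set" and Os :: "'o set"
    and \<phi> :: "'y \<Rightarrow> real^'p" and \<psi> :: "'o \<Rightarrow> real^'p"
    and L :: "'o \<Rightarrow> 'y \<Rightarrow> real"
    and V :: "real^'p^'p" and b :: "real^'p" and c :: "'y \<Rightarrow> real"
    and \<Omega> :: "real^'p \<Rightarrow> ereal"
    and yL :: "real^'p \<Rightarrow> 'o"
    and d :: "real^'p \<Rightarrow> 'o"
    and \<epsilon> :: real
  assumes finY: "finite Y" and finO: "finite Os"
    and L_form: "\<And>yh y. yh \<in> Os \<Longrightarrow> y \<in> Y \<Longrightarrow> L yh y = \<psi> yh \<bullet> (V *v \<phi> y + b) + c y"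
    and L_nonneg: "\<And>yh y. yh \<in> Os \<Longrightarrow> y \<in> Y \<Longrightarrow> 0 \<le> L yh y"
    and proper: "proper_fun \<Omega>" and convex: "convex_ext \<Omega>" and lsc: "lsc_fun \<Omega>"
    and dom: "\<phi> ` Y \<subseteq> edom \<Omega>"
    and yL_in: "\<And>u. yL u \<in> Os"
    and yL_min: "\<And>u y'. y' \<in> Os \<Longrightarrow> \<psi> (yL u) \<bullet> (V *v u + b) \<le> \<psi> y' \<bullet> (V *v u + b)"
    and d_in: "\<And>\<theta>. d \<theta> \<in> Os"
    and eps: "0 \<le> \<epsilon>"
  shows "(INF (\<theta>, q) \<in> {(\<theta>, q). q \<in> prob_simplex Y \<and> excess_ptw_risk Y Os L (d \<theta>) q \<ge> \<epsilon>}.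
            excess_surr_risk Y (\<lambda>\<theta> y. fy_loss \<Omega> \<theta> (\<phi> y)) \<theta> q)
       = (INF (\<theta>, \<mu>) \<in> {(\<theta>, \<mu>). \<mu> \<in> convex hull (\<phi> ` Y) \<and>
              (\<psi> (d \<theta>) - \<psi> (yL \<mu>)) \<bullet> (V *v \<mu> + b) \<ge> \<epsilon>}.
            fy_loss \<Omega> \<theta> \<mu>)"
  
proof -
  let ?S = "\<lambda>\<theta> y. fy_loss \<Omega> \<theta> (\<phi> y)"
  define mf where "mf = (\<lambda>q. (\<Sum>y\<in>Y. q y *\<^sub>R \<phi> y))"
  define C where "C = convex hull (\<phi> ` Y)"
  define Fc where "Fc = fenchel_conj \<Omega>"
  have L1: "mf q \<in> C" if q: "q \<in> prob_simplex Y" for q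
    unfolding mf_def C_def
    by (rule convex_sum[OF finY convex_convex_hull]) (use q in \<open>auto simp: prob_simplex_def intro: hull_inc\<close>)
  have L2: "C \<subseteq> mf ` prob_simplex Y"
    unfolding C_def
  proof (rule hull_minimal)
    show "\<phi> ` Y \<subseteq> mf ` prob_simplex Y"
    proof
      fix z assume "z \<in> \<phi> ` Y"
      then obtain y where y: "y \<in> Y" "z = \<phi> y" by auto
      let ?q = "\<lambda>x. if x = y then 1 else (0::real)"
      have qs: "?q \<in> prob_simplex Y" using y finY by (auto simp: prob_simplex_def)
      have "mf ?q = (\<Sum>x\<in>Y. if x = y then \<phi> x else 0)" unfolding mf_def
        by (rule sum.cong) auto
      also have "\<dots> = z" using y finY by (simp add: sum.delta')
      finally have "z = mf ?q" by simp
      then show "z \<in> mf ` prob_simplex Y" using qs by (rule image_eqI)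
    qed
    show "convex (mf ` prob_simplex Y)"
    proof (rule convexI)
      fix x1 x2 u v assume x1: "x1 \<in> mf ` prob_simplex Y" and x2: "x2 \<in> mf ` prob_simplex Y"
        and u: "0 \<le> (u::real)" and v: "0 \<le> v" and uv: "u + v = 1"
      obtain q1 where q1: "q1 \<in> prob_simplex Y" "x1 = mf q1" using x1 by blast
      obtain q2 where q2: "q2 \<in> prob_simplex Y" "x2 = mf q2" using x2 by blast
      let ?q = "\<lambda>y. u * q1 y + v * q2 y"
      have "sum ?q Y = u * sum q1 Y + v * sum q2 Y"
        by (simp add: sum.distrib sum_distrib_left)
      then have qs: "?q \<in> prob_simplex Y" using q1(1) q2(1) u v uv
        unfolding prob_simplex_def by auto
      have "mf ?q = (\<Sum>y\<in>Y. u *\<^sub>R (q1 y *\<^sub>R \<phi> y) + v *\<^sub>R (q2 y *\<^sub>R \<phi> y))"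
        unfolding mf_def by (rule sum.cong) (auto simp: scaleR_add_left)
      also have "\<dots> = u *\<^sub>R mf q1 + v *\<^sub>R mf q2"
        unfolding mf_def by (simp only: sum.distrib scaleR_sum_right)
      finally have "u *\<^sub>R x1 + v *\<^sub>R x2 = mf ?q" using q1 q2 by simp
      then show "u *\<^sub>R x1 + v *\<^sub>R x2 \<in> mf ` prob_simplex Y" using qs by (rule image_eqI)
    qed
  qed
  have edom_cvx: "convex (edom \<Omega>)"
  proof (rule convexI)
    fix x1 x2 u v assume x1: "x1 \<in> edom \<Omega>" and x2: "x2 \<in> edom \<Omega>"
      and u: "0 \<le> (u::real)" and v: "0 \<le> v" and uv: "u + v = 1"
    show "u *\<^sub>R x1 + v *\<^sub>R x2 \<in> edom \<Omega>"
    proof (cases "u = 0 \<or> v = 0")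
      case True then show ?thesis using x1 x2 uv by auto
    next
      case False
      then have u0: "0 < u" "u < 1" and vv: "v = 1 - u" using u v uv by auto
      have "\<Omega> (u *\<^sub>R x1 + v *\<^sub>R x2) \<le> ereal u * \<Omega> x1 + ereal (1-u) * \<Omega> x2"
        using convex u0 vv unfolding convex_ext_def by blast
      also have "\<dots> < \<infinity>" using x1 x2 u0 unfolding edom_def
        by (simp add: ereal_mult_less_right)
      finally show ?thesis unfolding edom_def by simp
    qed
  qed
  have L3: "C \<subseteq> edom \<Omega>" unfolding C_def by (rule hull_minimal[OF dom]) (rule edom_cvx)
  have fin: "\<exists>m. \<Omega> \<mu> = ereal m" if "\<mu> \<in> edom \<Omega>" for \<mu>
    using that proper unfolding edom_def proper_fun_def by (cases "\<Omega> \<mu>") auto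
  have Vsum: "V *v (\<Sum>y\<in>Y. q y *\<^sub>R \<phi> y) = (\<Sum>y\<in>Y. q y *\<^sub>R (V *v \<phi> y))" for q
    using finY by (induction Y rule: finite_induct) (simp_all add: matrix_vector_right_distrib matrix_vector_mult_scaleR)
  have L4a: "ptw_risk Y L yh q = \<psi> yh \<bullet> (V *v mf q + b) + (\<Sum>y\<in>Y. q y * c y)"
    if q: "q \<in> prob_simplex Y" and yh: "yh \<in> Os" for q yh
  proof -
    have sq: "sum q Y = 1" using q by (simp add: prob_simplex_def)
    have "ptw_risk Y L yh q = (\<Sum>y\<in>Y. q y * (\<psi> yh \<bullet> (V *v \<phi> y + b)) + q y * c y)"
      unfolding ptw_risk_def by (rule sum.cong) (simp_all add: L_form[OF yh] distrib_left)
    also have "\<dots> = (\<Sum>y\<in>Y. q y * (\<psi> yh \<bullet> (V *v \<phi> y + b))) + (\<Sum>y\<in>Y. q y * c y)"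
      by (simp add: sum.distrib)
    also have "(\<Sum>y\<in>Y. q y * (\<psi> yh \<bullet> (V *v \<phi> y + b))) = \<psi> yh \<bullet> (\<Sum>y\<in>Y. q y *\<^sub>R (V *v \<phi> y + b))"
      by (simp add: inner_sum_right)
    also have "(\<Sum>y\<in>Y. q y *\<^sub>R (V *v \<phi> y + b)) = (\<Sum>y\<in>Y. q y *\<^sub>R (V *v \<phi> y)) + (\<Sum>y\<in>Y. q y) *\<^sub>R b"
      by (simp add: scaleR_add_right sum.distrib scaleR_sum_left)
    also have "\<dots> = V *v mf q + b" using sq unfolding mf_def Vsum by simp
    finally show ?thesis .
  qed
  have L4: "excess_ptw_risk Y Os L yh q = (\<psi> yh - \<psi> (yL (mf q))) \<bullet> (V *v mf q + b)"
    if q: "q \<in> prob_simplex Y" and yh: "yh \<in> Os" for q yh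
  proof -
    have "(MIN y'\<in>Os. ptw_risk Y L y' q) = ptw_risk Y L (yL (mf q)) q"
    proof (rule Min_eqI)
      show "finite (((\<lambda>y'. ptw_risk Y L y' q)) ` Os)" using finO by simp
      show "ptw_risk Y L (yL (mf q)) q \<in> (\<lambda>y'. ptw_risk Y L y' q) ` Os" using yL_in by simp
      fix z assume "z \<in> (\<lambda>y'. ptw_risk Y L y' q) ` Os"
      then obtain y' where y': "y' \<in> Os" "z = ptw_risk Y L y' q" by blast
      show "ptw_risk Y L (yL (mf q)) q \<le> z"
        using y' yL_min[OF y'(1), of "mf q"] L4a[OF q y'(1)] L4a[OF q yL_in] by simp
    qed
    then show ?thesis unfolding excess_ptw_risk_def using L4a[OF q yh] L4a[OF q yL_in]
      by (simp add: inner_diff_left)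
  qed
  have FY: "ereal (\<theta> \<bullet> x) - \<Omega> x \<le> Fc \<theta>" for \<theta> x
    unfolding Fc_def fenchel_conj_def by (rule SUP_upper) auto
  have L5: "excess_surr_risk Y ?S \<theta> q = fy_loss \<Omega> \<theta> (mf q)"
    if q: "q \<in> prob_simplex Y" for \<theta> q
  proof -
    have sq: "sum q Y = 1" and qnn: "\<And>y. y \<in> Y \<Longrightarrow> 0 \<le> q y" using q by (auto simp: prob_simplex_def)
    obtain y0 where y0: "y0 \<in> Y" "q y0 > 0"
    proof -
      have "\<exists>y\<in>Y. q y \<noteq> 0" using sq by (metis one_neq_zero sum.neutral)
      then show ?thesis using qnn that by (metis less_eq_real_def)
    qed
    have mC: "mf q \<in> edom \<Omega>" using L3 L1[OF q] by (rule subsetD)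
    obtain m where m: "\<Omega> (mf q) = ereal m" using fin[OF mC] by blast
    define r where "r = (\<lambda>y. real_of_ereal (\<Omega> (\<phi> y)))"
    have r: "\<Omega> (\<phi> y) = ereal (r y)" if "y \<in> Y" for y
    proof -
      have "\<phi> y \<in> edom \<Omega>" using dom imageI[OF that] by (rule subsetD)
      then obtain t where "\<Omega> (\<phi> y) = ereal t" using fin by blast
      then show ?thesis unfolding r_def by simp
    qed
    define R where "R = (\<Sum>y\<in>Y. q y * r y)"
    have Fnm: "Fc \<theta>' \<noteq> -\<infinity>" for \<theta>'
    proof
      assume "Fc \<theta>' = -\<infinity>"
      then have "ereal (\<theta>' \<bullet> mf q) - ereal m \<le> -\<infinity>" using FY[of \<theta>' "mf q"] unfolding m by simp
      then show False by simp
    qed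
    have G: "surr_risk Y ?S \<theta>' q = Fc \<theta>' + ereal (R - \<theta>' \<bullet> mf q)" for \<theta>'
    proof (cases "Fc \<theta>'")
      case (real f)
      have "surr_risk Y ?S \<theta>' q = (\<Sum>y\<in>Y. ereal (q y * (f + r y - \<theta>' \<bullet> \<phi> y)))"
        unfolding surr_risk_def fy_loss_def Fc_def[symmetric]
        by (rule sum.cong) (simp_all add: r real)
      also have "\<dots> = ereal (\<Sum>y\<in>Y. q y * (f + r y - \<theta>' \<bullet> \<phi> y))" by simp
      also have "(\<Sum>y\<in>Y. q y * (f + r y - \<theta>' \<bullet> \<phi> y)) = f * sum q Y + R - \<theta>' \<bullet> mf q"
        unfolding R_def mf_def
        by (simp add: algebra_simps sum.distrib sum_subtractf sum_distrib_left inner_sum_right)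
      finally show ?thesis using sq real by simp
    next
      case PInf
      have "surr_risk Y ?S \<theta>' q = \<infinity>" unfolding surr_risk_def sum_Pinfty
        using finY y0 PInf r[OF y0(1)] unfolding fy_loss_def Fc_def[symmetric] by auto
      then show ?thesis using PInf by simp
    next
      case MInf then show ?thesis using Fnm by blast
    qed
    have INFeq: "(INF \<theta>'. surr_risk Y ?S \<theta>' q) = ereal (R - m)"
    proof (rule antisym)
      show "ereal (R - m) \<le> (INF \<theta>'. surr_risk Y ?S \<theta>' q)"
      proof (rule INF_greatest)
        fix \<theta>'
        have "ereal (\<theta>' \<bullet> mf q - m) \<le> Fc \<theta>'" using FY[of \<theta>' "mf q"] m by simp
        then have "ereal (\<theta>' \<bullet> mf q - m) + ereal (R - \<theta>' \<bullet> mf q) \<le> Fc \<theta>' + ereal (R - \<theta>' \<bullet> mf q)"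
          by (rule add_right_mono)
        then show "ereal (R - m) \<le> surr_risk Y ?S \<theta>' q" unfolding G by simp
      qed
      show "(INF \<theta>'. surr_risk Y ?S \<theta>' q) \<le> ereal (R - m)"
      proof (rule ereal_le_epsilon2)
        fix e :: real assume e: "0 < e"
        obtain \<theta>' where th: "\<forall>x. ereal (\<theta>' \<bullet> x) - \<Omega> x \<le> ereal (\<theta>' \<bullet> mf q - (m - e))"
          using fenchel_moreau_pt[OF proper convex lsc m, of "m - e"] e by auto
        have "Fc \<theta>' \<le> ereal (\<theta>' \<bullet> mf q - (m - e))"
          unfolding Fc_def fenchel_conj_def using th by (intro SUP_least) auto
        then have "Fc \<theta>' + ereal (R - \<theta>' \<bullet> mf q) \<le> ereal (\<theta>' \<bullet> mf q - (m - e)) + ereal (R - \<theta>' \<bullet> mf q)"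
          by (rule add_right_mono)
        also have "ereal (\<theta>' \<bullet> mf q - (m - e)) + ereal (R - \<theta>' \<bullet> mf q) = ereal (R - m) + ereal e"
          by simp
        finally have "surr_risk Y ?S \<theta>' q \<le> ereal (R - m) + ereal e" unfolding G .
        then show "(INF \<theta>'. surr_risk Y ?S \<theta>' q) \<le> ereal (R - m) + ereal e"
          by (meson INF_lower UNIV_I order_trans)
      qed
    qed
    have lhs: "excess_surr_risk Y ?S \<theta> q = Fc \<theta> + ereal (R - \<theta> \<bullet> mf q) - ereal (R - m)"
      unfolding excess_surr_risk_def INFeq unfolding G ..
    have rhs: "fy_loss \<Omega> \<theta> (mf q) = Fc \<theta> + ereal m - ereal (\<theta> \<bullet> mf q)"
      unfolding fy_loss_def Fc_def m ..
    have "Fc \<theta> + ereal (R - \<theta> \<bullet> mf q) - ereal (R - m) = Fc \<theta> + ereal m - ereal (\<theta> \<bullet> mf q)"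
    proof (cases "Fc \<theta>")
      case (real f) then show ?thesis by simp
    next
      case PInf then show ?thesis by simp
    next
      case MInf then show ?thesis using Fnm by blast
    qed
    then show ?thesis unfolding lhs rhs .
  qed
  let ?A = "{(\<theta>, q). q \<in> prob_simplex Y \<and> excess_ptw_risk Y Os L (d \<theta>) q \<ge> \<epsilon>}"
  let ?B = "{(\<theta>, \<mu>). \<mu> \<in> convex hull (\<phi> ` Y) \<and> (\<psi> (d \<theta>) - \<psi> (yL \<mu>)) \<bullet> (V *v \<mu> + b) \<ge> \<epsilon>}"
  define h where "h = (\<lambda>(\<theta>::real^'p, q). (\<theta>, mf q))"
  have BA: "?B = h ` ?A"
  proof
    show "h ` ?A \<subseteq> ?B"
      using L1 L4 d_in unfolding h_def C_def by auto
    show "?B \<subseteq> h ` ?A"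
    proof
      fix z assume z: "z \<in> ?B"
      then obtain \<theta> \<mu> where z: "z = (\<theta>, \<mu>)" "\<mu> \<in> C" "(\<psi> (d \<theta>) - \<psi> (yL \<mu>)) \<bullet> (V *v \<mu> + b) \<ge> \<epsilon>"
        unfolding C_def by auto
      obtain q where q: "q \<in> prob_simplex Y" "\<mu> = mf q" using L2 z(2) by blast
      have "(\<theta>, q) \<in> ?A" using q z L4[OF q(1) d_in] by simp
      moreover have "z = h (\<theta>, q)" using z q unfolding h_def by simp
      ultimately show "z \<in> h ` ?A" by blast
    qed
  qed
  have "(INF (\<theta>, \<mu>) \<in> ?B. fy_loss \<Omega> \<theta> \<mu>) = (INF z \<in> ?A. (\<lambda>(\<theta>, \<mu>). fy_loss \<Omega> \<theta> \<mu>) (h z))"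
    unfolding BA image_image by simp
  also have "\<dots> = (INF (\<theta>, q) \<in> ?A. excess_surr_risk Y ?S \<theta> q)"
    by (rule INF_cong) (auto simp: h_def L5)
  finally show ?thesis by simp
qed

end
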